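(* Let $m\ge 2$ and $j\in[1,m-1]$ be integers, let $V=\wedge^j\mathbb{C}^m$, let $G$ be the image of $\mathrm{SL}_m(\mathbb{C})$ in $\mathrm{GL}(V)$ under the $j$-th exterior power map, and let $\mathfrak g\subset\mathrm{End}(V)$ be its Lie algebra. Then $G\cap\mathfrak g\neq\emptyset$ (as subsets of $\mathrm{End}(V)$). *)

theory Defs
  imports "Jordan_Normal_Form.DL_Submatrix" "Jordan_Normal_Form.Determinant"
begin

text \<open>Basis of the j-th exterior power of C^m: e_I = e_{i1} wedge ... wedge e_{ij}
  for I a j-subset of {0..<m}, elements taken in increasing order.
  Endomorphisms of that space are represented by their matrices, i.e. functions
  on pairs of basis indices (set to 0 outside the basis index set).\<close>

definition wedge_basis :: "nat \<Rightarrow> nat \<Rightarrow> nat set set" where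
  "wedge_basis m j = {I. I \<subseteq> {..<m} \<and> card I = j}"

definition wedge_mat :: "nat \<Rightarrow> nat \<Rightarrow> complex mat \<Rightarrow> (nat set \<Rightarrow> nat set \<Rightarrow> complex)" where
  "wedge_mat m j A = (\<lambda>I J. if I \<in> wedge_basis m j \<and> J \<in> wedge_basis m j
       then det (submatrix A I J) else 0)"

definition SL_mat :: "nat \<Rightarrow> complex mat set" where
  "SL_mat m = {A. A \<in> carrier_mat m m \<and> det A = 1}"

definition wedge_group :: "nat \<Rightarrow> nat \<Rightarrow> (nat set \<Rightarrow> nat set \<Rightarrow> complex) set" where
  "wedge_group m j = wedge_mat m j ` SL_mat m"

text \<open>Its Lie algebra: the image of sl_m(C) under the differential at the identity of
  the polynomial map A \<mapsto> wedge^j A, i.e. D = d/dt wedge^j(1 + tX) at t = 0.\<close>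
definition wedge_lie_alg :: "nat \<Rightarrow> nat \<Rightarrow> (nat set \<Rightarrow> nat set \<Rightarrow> complex) set" where
  "wedge_lie_alg m j = {D. \<exists>X \<in> carrier_mat m m. (\<Sum>i<m. X $$ (i, i)) = 0 \<and>
     (\<forall>I J. ((\<lambda>t::complex. wedge_mat m j (1\<^sub>m m + t \<cdot>\<^sub>m X) I J) has_field_derivative D I J) (at 0))}"

end

theory Submission
  imports Defs
begin

lemma prod_list_map_upt0: "prod_list (map f [0..<n]) = prod f {0..<n}"
  by (induct n) auto

lemma pick_inj: "inj_on (pick I) {0..<card I}"
proof (rule inj_onI)
  fix a b assume a: "a \<in> {0..<card I}" and b: "b \<in> {0..<card I}" and e: "pick I a = pick I b"
  show "a = b"
  proof (rule ccontr)
    assume "a \<noteq> b"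
    then have "a < b \<or> b < a" by auto
    moreover have "a < b \<Longrightarrow> pick I a < pick I b" using pick_mono[of b I a] b by auto
    moreover have "b < a \<Longrightarrow> pick I b < pick I a" using pick_mono[of a I b] a by auto
    ultimately show False using e by auto
  qed
qed
lemma pick_image: assumes "finite I" shows "pick I ` {0..<card I} = I"
proof -
  have sub: "pick I ` {0..<card I} \<subseteq> I"
  proof
    fix y assume "y \<in> pick I ` {0..<card I}"
    then obtain a where "a < card I" "y = pick I a" by auto
    then show "y \<in> I" using pick_in_set[of a I] by auto
  qed
  have "card (pick I ` {0..<card I}) = card I" using card_image[OF pick_inj] by simp
  then show ?thesis using card_subset_eq[OF assms sub] by simp
qed

definition diagm :: "nat \<Rightarrow> (nat \<Rightarrow> complex) \<Rightarrow> complex mat" where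
  "diagm m d = mat m m (\<lambda>(i,k). if i = k then d i else 0)"

lemma det_sub_diagm:
  fixes d :: "nat \<Rightarrow> complex"
  assumes I: "I \<subseteq> {..<m}" "card I = j" and J: "J \<subseteq> {..<m}" "card J = j"
  shows "det (submatrix (diagm m d) I J) = (if I = J then prod d I else 0)"
proof -
  let ?M = "diagm m d"
  let ?S = "submatrix ?M I J"
  have fI: "finite I" using I finite_subset by blast
  have fJ: "finite J" using J finite_subset by blast
  have rI: "{i. i < dim_row ?M \<and> i \<in> I} = I" using I by (auto simp: diagm_def)
  have rJ: "{i. i < dim_col ?M \<and> i \<in> J} = J" using J by (auto simp: diagm_def)
  have car: "?S \<in> carrier_mat j j" by (intro carrier_matI) (simp_all only: dim_submatrix rI rJ I J)
  have ent: "?S $$ (a,b) = (if pick I a = pick J b then d (pick I a) else 0)" if "a < j" "b < j" for a b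
  proof -
    have pa: "pick I a \<in> I" using pick_in_set[of a I] that I by auto
    have pb: "pick J b \<in> J" using pick_in_set[of b J] that J by auto
    have "?S $$ (a,b) = ?M $$ (pick I a, pick J b)"
      by (rule submatrix_index) (use rI rJ that I J in auto)
    also have "\<dots> = (if pick I a = pick J b then d (pick I a) else 0)"
    proof -
      have "pick I a < m" "pick J b < m" using pa pb I J by auto
      then show ?thesis by (simp add: diagm_def)
    qed
    finally show ?thesis .
  qed
  show ?thesis
  proof (cases "I = J")
    case True
    have ut: "upper_triangular ?S"
      unfolding upper_triangular_def
    proof (intro allI impI)
      fix a b assume a: "a < dim_row ?S" and b: "b < a"
      have aj: "a < j" using a car by auto
      have "pick I b < pick I a" using pick_mono[of a I b] aj b I by auto
      then show "?S $$ (a,b) = 0" using ent[of a b] aj b True by auto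
    qed
    have "det ?S = prod_list (diag_mat ?S)" by (rule det_upper_triangular[OF ut car])
    also have "\<dots> = prod (\<lambda>a. d (pick I a)) {0..<j}"
      unfolding diag_mat_def using car ent True by (simp add: prod_list_map_upt0)
    also have "\<dots> = prod d (pick I ` {0..<card I})"
      using prod.reindex[OF pick_inj[of I], of d] I by simp
    also have "pick I ` {0..<card I} = I" by (rule pick_image[OF fI])
    finally show ?thesis using True by simp
  next
    case False
    have "\<not> I \<subseteq> J"
    proof
      assume "I \<subseteq> J"
      then have "I = J" using card_subset_eq[OF fJ] I J by simp
      then show False using False by simp
    qed
    then obtain i where iI: "i \<in> I" and iJ: "i \<notin> J" by auto
    define a0 where "a0 = card {x\<in>I. x < i}"
    have pa0: "pick I a0 = i" unfolding a0_def by (rule pick_card_in_set[OF iI])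
    have "{x\<in>I. x < i} \<subset> I" using iI by auto
    then have a0j: "a0 < j" unfolding a0_def using psubset_card_mono[OF fI] I by auto
    have "det ?S = (\<Sum> p \<in> {p. p permutes {0 ..< j}}. signof p * (\<Prod> a = 0 ..< j. ?S $$ (a, p a)))"
      by (rule det_def'[OF car])
    also have "\<dots> = 0"
    proof (rule sum.neutral, intro ballI)
      fix p assume "p \<in> {p. p permutes {0 ..< j}}"
      then have pj: "p a0 < j" using a0j permutes_in_image by fastforce
      have pb: "pick J (p a0) \<in> J" using pick_in_set[of "p a0" J] pj J by auto
      have "?S $$ (a0, p a0) = 0" using ent[OF a0j pj] pa0 pb iJ by auto
      then have "(\<Prod> a = 0 ..< j. ?S $$ (a, p a)) = 0"
        using a0j by (intro prod_zero) auto
      then show "signof p * (\<Prod> a = 0 ..< j. ?S $$ (a, p a)) = 0" by simp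
    qed
    finally show ?thesis using False by simp
  qed
qed

theorem lemma8:
  fixes m j :: nat
  assumes "m \<ge> 2" and "1 \<le> j" and "j \<le> m - 1"
  shows "wedge_group m j \<inter> wedge_lie_alg m j \<noteq> {}"
proof -
  have j0: "of_nat j \<noteq> (0::complex)" using assms by simp
  have jm: "of_nat j - of_nat m \<noteq> (0::complex)" using assms by simp
  define c :: complex where "c = of_nat j / (of_nat j - of_nat m)"
  define \<beta> :: complex where "\<beta> = rcis (root m (cmod c)) (Arg c / real m)"
  have m0: "m > 0" using assms by simp
  have bm: "\<beta> ^ m = c"
  proof -
    have "\<beta> ^ m = rcis (root m (cmod c) ^ m) (real m * (Arg c / real m))"
      unfolding \<beta>_def by (rule DeMoivre2)
    also have "\<dots> = rcis (cmod c) (Arg c)" using m0 by simp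
    also have "\<dots> = c" by (rule rcis_cmod_Arg)
    finally show ?thesis .
  qed
  define \<alpha> :: complex where "\<alpha> = (of_nat j - of_nat m) * \<beta> / of_nat j"
  define v :: complex where "v = \<beta> ^ j / of_nat j"
  define u :: complex where "u = - (of_nat m - 1) * v"
  define a where "a = (\<lambda>i::nat. if i = 0 then \<alpha> else \<beta>)"
  define x where "x = (\<lambda>i::nat. if i = 0 then u else v)"
  define A where "A = diagm m a"
  define X where "X = diagm m x"
  have Acar: "A \<in> carrier_mat m m" and Xcar: "X \<in> carrier_mat m m"
    by (auto simp: A_def X_def diagm_def)
  have split: "{0..<m} = insert 0 {1..<m}" using m0 by auto
  have detA: "det A = 1"
  proof -
    have ut: "upper_triangular A" by (auto simp: upper_triangular_def A_def diagm_def)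
    have "det A = prod_list (diag_mat A)" by (rule det_upper_triangular[OF ut Acar])
    also have "\<dots> = prod a {0..<m}" by (simp add: diag_mat_def A_def diagm_def prod_list_map_upt0)
    also have "\<dots> = \<alpha> * \<beta> ^ (m - 1)"
    proof -
      have "prod a {1..<m} = prod (\<lambda>_. \<beta>) {1..<m}" by (rule prod.cong) (auto simp: a_def)
      then show ?thesis using split by (simp add: a_def)
    qed
    also have "\<dots> = (of_nat j - of_nat m) / of_nat j * \<beta> ^ m"
    proof -
      have "\<beta> ^ m = \<beta> * \<beta> ^ (m - 1)" using m0 by (cases m) auto
      then show ?thesis unfolding \<alpha>_def using j0 by simp
    qed
    also have "\<dots> = 1" using bm j0 jm unfolding c_def by simp
    finally show ?thesis .
  qed
  have ASL: "A \<in> SL_mat m" using Acar detA by (simp add: SL_mat_def)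
  have trX: "(\<Sum>i<m. X $$ (i, i)) = 0"
  proof -
    have "(\<Sum>i<m. X $$ (i, i)) = sum x {0..<m}"
      by (rule sum.cong) (auto simp: X_def diagm_def)
    also have "\<dots> = u + of_nat (m - 1) * v"
    proof -
      have "sum x {1..<m} = sum (\<lambda>_. v) {1..<m}" by (rule sum.cong) (auto simp: x_def)
      then show ?thesis using split by (simp add: x_def)
    qed
    also have "\<dots> = 0" using m0 by (simp add: u_def of_nat_diff algebra_simps)
    finally show ?thesis .
  qed
  have key: "prod a I = sum x I" if I: "I \<in> wedge_basis m j" for I
  proof -
    have fI: "finite I" and cI: "card I = j" using I finite_subset[of I "{..<m}"]
      by (auto simp: wedge_basis_def)
    show ?thesis
    proof (cases "0 \<in> I")
      case True
      have c1: "card (I - {0}) = j - 1" using True cI fI by simp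
      have "prod a I = \<alpha> * prod a (I - {0})" using True fI by (simp add: prod.remove a_def)
      also have "prod a (I - {0}) = \<beta> ^ (j - 1)"
        using c1 by (subst prod.cong[of _ _ _ "\<lambda>_. \<beta>"]) (auto simp: a_def)
      moreover have "sum x I = u + sum x (I - {0})" using True fI by (simp add: sum.remove x_def)
      moreover have "sum x (I - {0}) = of_nat (j - 1) * v"
        using c1 by (subst sum.cong[of _ _ _ "\<lambda>_. v"]) (auto simp: x_def)
      moreover have "\<alpha> * \<beta> ^ (j - 1) = u + of_nat (j - 1) * v"
      proof -
        have bj: "\<beta> ^ j = \<beta> * \<beta> ^ (j - 1)" using assms by (cases j) auto
        have e1: "\<alpha> * \<beta> ^ (j - 1) = (of_nat j - of_nat m) * v"
          unfolding \<alpha>_def v_def using bj j0 by simp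
        have e2: "u + of_nat (j - 1) * v = (of_nat j - of_nat m) * v"
          unfolding u_def using assms by (simp add: of_nat_diff algebra_simps)
        show ?thesis using e1 e2 by simp
      qed
      ultimately show ?thesis by simp
    next
      case False
      have "prod a I = \<beta> ^ j" using cI False by (subst prod.cong[of _ _ _ "\<lambda>_. \<beta>"]) (auto simp: a_def)
      moreover have "sum x I = of_nat j * v" using cI False by (subst sum.cong[of _ _ _ "\<lambda>_. v"]) (auto simp: x_def)
      ultimately show ?thesis using j0 by (simp add: v_def)
    qed
  qed
  have wA: "wedge_mat m j A I J = (if I \<in> wedge_basis m j \<and> J \<in> wedge_basis m j \<and> I = J then prod a I else 0)"
    for I J
    unfolding wedge_mat_def A_def using det_sub_diagm[of I m j J a]
    by (auto simp: wedge_basis_def)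
  have eqM: "1\<^sub>m m + t \<cdot>\<^sub>m X = diagm m (\<lambda>i. 1 + t * x i)" for t
    by (rule eq_matI) (auto simp: X_def diagm_def)
  have wX: "wedge_mat m j (1\<^sub>m m + t \<cdot>\<^sub>m X) I J =
     (if I \<in> wedge_basis m j \<and> J \<in> wedge_basis m j \<and> I = J then (\<Prod>i\<in>I. 1 + t * x i) else 0)"
    for I J t
    unfolding wedge_mat_def eqM using det_sub_diagm[of I m j J "\<lambda>i. 1 + t * x i"]
    by (auto simp: wedge_basis_def)
  have deriv: "((\<lambda>t::complex. wedge_mat m j (1\<^sub>m m + t \<cdot>\<^sub>m X) I J) has_field_derivative wedge_mat m j A I J) (at 0)"
    for I J
  proof (cases "I \<in> wedge_basis m j \<and> J \<in> wedge_basis m j \<and> I = J")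
    case True
    have "((\<lambda>t. \<Prod>i\<in>I. 1 + t * x i) has_field_derivative (\<Sum>i\<in>I. x i * (\<Prod>y\<in>I-{i}. 1 + 0 * x y))) (at 0)"
      by (rule has_field_derivative_prod) (auto intro!: derivative_eq_intros)
    then have "((\<lambda>t. \<Prod>i\<in>I. 1 + t * x i) has_field_derivative prod a I) (at 0)"
      using key True by simp
    then show ?thesis unfolding wX wA using True by simp
  next
    case False
    have "(\<lambda>t::complex. wedge_mat m j (1\<^sub>m m + t \<cdot>\<^sub>m X) I J) = (\<lambda>t. 0)"
      using False by (simp only: wX) simp
    moreover have "wedge_mat m j A I J = 0" using False by (simp only: wA) simp
    ultimately show ?thesis by simp
  qed
  have "wedge_mat m j A \<in> wedge_group m j" using ASL by (simp add: wedge_group_def)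
  moreover have "wedge_mat m j A \<in> wedge_lie_alg m j"
    unfolding wedge_lie_alg_def
    by (rule CollectI, rule bexI[OF _ Xcar]) (use trX deriv in blast)
  ultimately show ?thesis by blast
qed

end
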